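(* The feasible SINR region of a multicast system is log-convex: the set $\log(\Upsilon)=\{(\log\mu_1,\dots,\log\mu_N):\boldsymbol\mu\in\Upsilon,\ \boldsymbol\mu>\mathbf 0\}$ is a convex subset of $\mathbb R^N$.
   Context: Multicast system: $N$ transmitters $T_1,\dots,T_N$; transmitter $T_i$ has $K_i\geq1$ receivers $R_i^{k}$, $k\in\mathcal K_i=\{1,\dots,K_i\}$. Channel gains $g_{r_i^{k},t_j}\geq 0$ (from $T_j$ to $R_i^k$) with $g_{r_i^{k},t_i}>0$, such that for every choice $k_i\in\mathcal K_i$ ($i=1,\dots,N$) the $N\times N$ matrix with $(i,j)$ entry $g_{r_i^{k_i},t_j}/g_{r_i^{k_i},t_i}$ for $j\neq i$ and $0$ on the diagonal is irreducible; noise variance $\sigma^2>0$. For $\mathbf p\geq\mathbf 0$: $\gamma_i^{k}(\mathbf p)=\frac{g_{r_i^{k},t_i}p_i}{\sum_{j\neq i}g_{r_i^{k},t_j}p_j+\sigma^2}$, $\gamma_i(\mathbf p)=\min_{k\in\mathcal K_i}\gamma_i^k(\mathbf p)$, $\Gamma(\mathbf p)=(\gamma_1(\mathbf p),\dots,\gamma_N(\mathbf p))$. The feasible SINR region is $\Upsilon=\{\Gamma(\mathbf p):\mathbf p\in\mathbb R^N,\mathbf p\geq\mathbf 0\}$. *)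

theory Defs
  imports "HOL-Analysis.Analysis"
begin

text \<open>Transmitters are indexed by a finite type 'n (so N = CARD('n)).
  Transmitter i has receivers k in {1..K i}. Channel gain g i k j is the gain
  from transmitter T_j to receiver R_i^k.\<close>

definition irreducible_mat :: "('n \<Rightarrow> 'n \<Rightarrow> real) \<Rightarrow> bool" where
  "irreducible_mat M \<longleftrightarrow>
     (\<forall>i j. i \<noteq> j \<longrightarrow> (i, j) \<in> {(a, b). M a b > 0}\<^sup>+)"

definition sinr_rx :: "('n \<Rightarrow> nat \<Rightarrow> 'n \<Rightarrow> real) \<Rightarrow> real \<Rightarrow> real^'n \<Rightarrow> 'n \<Rightarrow> nat \<Rightarrow> real" where
  "sinr_rx g sigma2 p i k =
     g i k i * p$i / ((\<Sum>j\<in>UNIV - {i}. g i k j * p$j) + sigma2)"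

definition sinr :: "('n \<Rightarrow> nat \<Rightarrow> 'n \<Rightarrow> real) \<Rightarrow> ('n \<Rightarrow> nat) \<Rightarrow> real \<Rightarrow> real^'n \<Rightarrow> 'n \<Rightarrow> real" where
  "sinr g K sigma2 p i = Min ((\<lambda>k. sinr_rx g sigma2 p i k) ` {1..K i})"

definition Gamma :: "('n \<Rightarrow> nat \<Rightarrow> 'n \<Rightarrow> real) \<Rightarrow> ('n \<Rightarrow> nat) \<Rightarrow> real \<Rightarrow> real^'n \<Rightarrow> real^'n" where
  "Gamma g K sigma2 p = (\<chi> i. sinr g K sigma2 p i)"

definition feasible_sinr_region :: "('n \<Rightarrow> nat \<Rightarrow> 'n \<Rightarrow> real) \<Rightarrow> ('n \<Rightarrow> nat) \<Rightarrow> real \<Rightarrow> (real^'n) set" where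
  "feasible_sinr_region g K sigma2 = {Gamma g K sigma2 p | p. \<forall>i. p$i \<ge> 0}"

definition log_set :: "(real^'n) set \<Rightarrow> (real^'n) set" where
  "log_set U = {(\<chi> i. ln (mu$i)) | mu. mu \<in> U \<and> (\<forall>i. mu$i > 0)}"

end

theory Submission imports Defs begin

lemma young2:
  fixes x y A B u v :: real
  assumes "x>0" "y>0" "A>0" "B>0" "u\<ge>0" "v\<ge>0" "u+v=1"
  shows "x powr u *  y powr v \<le> (A powr u *  B powr v) *  (u * x/A + v * y/B)"
proof -
  have "(x/A) powr u *  (y/B) powr v \<le> u * (x/A) + v * (y/B)"
    using Youngs_inequality_0[of u v "x/A" "y/B"] assms by simp
  moreover have "(x/A) powr u *  (y/B) powr v = (x powr u *  y powr v) / (A powr u *  B powr v)"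
    by (simp add: powr_divide)
  moreover have "A powr u *  B powr v > 0" using assms by simp
  ultimately show ?thesis by (simp add: divide_le_eq mult.commute)
qed

lemma holder_sum:
  fixes a x y :: "'a \<Rightarrow> real" and s u v :: real
  assumes "finite S" "\<forall>j\<in>S. a j \<ge> 0 \<and> x j > 0 \<and> y j > 0" "s>0" "u\<ge>0" "v\<ge>0" "u+v=1"
  shows "(\<Sum>j\<in>S. a j *  (x j powr u *  y j powr v)) + s
     \<le> ((\<Sum>j\<in>S. a j *  x j) + s) powr u *  ((\<Sum>j\<in>S. a j *  y j) + s) powr v"
proof -
  define A where "A = (\<Sum>j\<in>S. a j *  x j) + s"
  define B where "B = (\<Sum>j\<in>S. a j *  y j) + s"
  define C where "C = A powr u *  B powr v"
  have A0: "A > 0" unfolding A_def using assms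
    by (smt (verit) mult_nonneg_nonneg sum_nonneg)
  have B0: "B > 0" unfolding B_def using assms
    by (smt (verit) mult_nonneg_nonneg sum_nonneg)
  have t: "a j *  (x j powr u *  y j powr v) \<le> C *  (u * (a j *  x j)/A + v * (a j *  y j)/B)" if "j\<in>S" for j
  proof -
    have "x j powr u *  y j powr v \<le> C *  (u * x j/A + v * y j/B)"
      unfolding C_def using young2[of "x j" "y j" A B u v] assms that A0 B0 by auto
    then have "a j *  (x j powr u *  y j powr v) \<le> a j *  (C *  (u * x j/A + v * y j/B))"
      using assms that by (simp add: mult_left_mono)
    then show ?thesis by (simp add: algebra_simps)
  qed
  have "s = s powr u *  s powr v" using assms by (simp flip: powr_add)
  also have "\<dots> \<le> C *  (u * s/A + v * s/B)"
    unfolding C_def using young2[of s s A B u v] assms A0 B0 by auto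
  finally have ts: "s \<le> C *  (u * s/A + v * s/B)" .
  have "(\<Sum>j\<in>S. a j *  (x j powr u *  y j powr v)) + s
      \<le> (\<Sum>j\<in>S. C *  (u * (a j *  x j)/A + v * (a j *  y j)/B)) + C *  (u * s/A + v * s/B)"
    using sum_mono[of S "\<lambda>j. a j * (x j powr u * y j powr v)", OF t] ts by linarith
  also have "\<dots> = C *  (u *  A / A + v *  B / B)"
    unfolding A_def B_def
    by (simp add: sum.distrib sum_distrib_left sum_divide_distrib[symmetric] algebra_simps add_divide_distrib flip: sum_distrib_left)
  also have "\<dots> = C" using A0 B0 assms by simp
  finally show ?thesis unfolding C_def A_def B_def .
qed

lemma tendsto_Max_img:
  fixes f :: "nat \<Rightarrow> 'b \<Rightarrow> real"
  assumes "finite A" "A \<noteq> {}" "\<forall>k\<in>A. (\<lambda>n. f n k) \<longlonglongrightarrow> h k"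
  shows "(\<lambda>n. Max ((f n) ` A)) \<longlonglongrightarrow> Max (h ` A)"
  using assms
proof (induction A rule: finite_ne_induct)
  case (singleton x)
  then show ?case by simp
next
  case (insert a A)
  then show ?case by (simp add: tendsto_max)
qed

locale msys =
  fixes g :: "'n::finite \<Rightarrow> nat \<Rightarrow> 'n \<Rightarrow> real" and K :: "'n \<Rightarrow> nat" and s :: real
  assumes K_pos: "\<forall>i. K i \<ge> 1"
    and g_nonneg: "\<forall>i k j. k \<in> {1..K i} \<longrightarrow> g i k j \<ge> 0"
    and g_direct_pos: "\<forall>i k. k \<in> {1..K i} \<longrightarrow> g i k i > 0"
    and noise: "s > 0"
begin

definition D where "D p i k = ((\<Sum>j\<in>UNIV-{i}. g i k j * p$j) + s) / g i k i"
definition I where "I p i = Max ((\<lambda>k. D p i k) ` {1..K i})"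

lemma D_pos: assumes "\<forall>j. p$j \<ge> 0" "k \<in> {1..K i}" shows "D p i k > 0"
proof -
  have "(\<Sum>j\<in>UNIV-{i}. g i k j * p$j) \<ge> 0"
    using assms g_nonneg by (intro sum_nonneg) auto
  then show ?thesis unfolding D_def using noise g_direct_pos assms by auto
qed

lemma ne: "{1..K i} \<noteq> {}" using K_pos by auto

lemma I_ge: "k \<in> {1..K i} \<Longrightarrow> D p i k \<le> I p i"
  unfolding I_def by (rule Max_ge) auto

lemma I_att: "\<exists>k\<in>{1..K i}. I p i = D p i k"
proof -
  have "I p i \<in> (\<lambda>k. D p i k) ` {1..K i}" unfolding I_def using ne by (intro Max_in) auto
  then show ?thesis by auto
qed

lemma I_pos: "\<forall>j. p$j \<ge> 0 \<Longrightarrow> I p i > 0"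
  using I_att[where p=p and i=i] D_pos by force

lemma rx_eq: "k \<in> {1..K i} \<Longrightarrow> sinr_rx g s p i k = p$i / D p i k"
  unfolding sinr_rx_def D_def using g_direct_pos by (auto simp: field_simps)

lemma sinr_eq: assumes "\<forall>j. p$j \<ge> 0" "p$i > 0" shows "sinr g K s p i = p$i / I p i"
  unfolding sinr_def
proof (rule Min_eqI)
  show "finite ((\<lambda>k. sinr_rx g s p i k) ` {1..K i})" by auto
  obtain k0 where k0: "k0 \<in> {1..K i}" "I p i = D p i k0" using I_att[where p=p and i=i] by blast
  show "p $ i / I p i \<in> (\<lambda>k. sinr_rx g s p i k) ` {1..K i}"
    using k0 rx_eq by force
  fix y assume "y \<in> (\<lambda>k. sinr_rx g s p i k) ` {1..K i}"
  then obtain k where k: "k \<in> {1..K i}" "y = p$i / D p i k" using rx_eq by auto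
  show "p$i / I p i \<le> y" unfolding k(2)
  proof (rule divide_left_mono)
    show "D p i k \<le> I p i" using I_ge[OF k(1)] .
    show "0 \<le> p$i" using assms(2) by simp
    show "0 < I p i * D p i k" using D_pos[OF assms(1) k(1)] I_pos[OF assms(1)] by simp
  qed
qed

lemma sinr_zero: assumes "p$i = 0" shows "sinr g K s p i = 0"
proof -
  have "(\<lambda>k. sinr_rx g s p i k) ` {1..K i} = {0}"
    using ne assms by (auto simp: sinr_rx_def image_constant_conv)
  then show ?thesis unfolding sinr_def by simp
qed

lemma D_mono: assumes "\<forall>j. 0 \<le> p$j" "\<forall>j. p$j \<le> q$j" "k \<in> {1..K i}"
  shows "D p i k \<le> D q i k"
proof -
  have "(\<Sum>j\<in>UNIV-{i}. g i k j * p$j) \<le> (\<Sum>j\<in>UNIV-{i}. g i k j * q$j)"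
    using assms g_nonneg by (intro sum_mono mult_left_mono) auto
  then show ?thesis unfolding D_def using g_direct_pos assms
    by (intro divide_right_mono) (auto intro: less_imp_le)
qed

lemma I_mono: assumes "\<forall>j. 0 \<le> p$j" "\<forall>j. p$j \<le> q$j"
  shows "I p i \<le> I q i"
proof -
  obtain k0 where k0: "k0 \<in> {1..K i}" "I p i = D p i k0" using I_att by blast
  show ?thesis using D_mono[OF assms k0(1)] I_ge[OF k0(1), of q] k0(2) by linarith
qed

lemma I_tendsto: assumes "\<forall>j. (\<lambda>n. x n $ j) \<longlonglongrightarrow> L$j"
  shows "(\<lambda>n. I (x n) i) \<longlonglongrightarrow> I L i"
  unfolding I_def
proof (rule tendsto_Max_img[OF _ ne])
  show "\<forall>k\<in>{1..K i}. (\<lambda>n. D (x n) i k) \<longlonglongrightarrow> D L i k"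
    unfolding D_def using assms g_direct_pos
    by (auto intro!: tendsto_divide tendsto_add tendsto_sum tendsto_mult_left tendsto_const simp: less_le)
qed auto


lemma fixed_point:
  assumes c: "\<forall>i. c$i > 0" and q: "\<forall>j. q$j \<ge> 0" and sub: "\<forall>i. c$i * I q i \<le> q$i"
  shows "\<exists>p. (\<forall>i. p$i \<ge> 0) \<and> Gamma g K s p = c"
proof -
  define T where "T p = (\<chi> i. c$i * I p i)" for p :: "real^'n"
  define x where "x n = (T ^^ n) q" for n
  have xS: "x (Suc n) = T (x n)" for n unfolding x_def by simp
  have nn: "\<forall>j. x n $ j \<ge> 0" for n
  proof (induction n)
    case 0 then show ?case using q by (simp add: x_def)
  next
    case (Suc n) then show ?case
      unfolding xS T_def using c I_pos by (auto intro: less_imp_le)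
  qed
  have dec: "\<forall>j. x (Suc n) $ j \<le> x n $ j" for n
  proof (induction n)
    case 0 then show ?case using sub by (simp add: x_def T_def)
  next
    case (Suc n)
    show ?case
    proof
      fix j
      have "I (x (Suc n)) j \<le> I (x n) j" using I_mono[OF nn Suc] .
      then show "x (Suc (Suc n)) $ j \<le> x (Suc n) $ j"
        unfolding xS[of "Suc n"] xS[of n] T_def using c by (simp add: mult_left_mono less_imp_le)
    qed
  qed
  have "\<exists>L. (\<lambda>n. x n $ j) \<longlonglongrightarrow> L" for j
  proof -
    have "decseq (\<lambda>n. x n $ j)" using dec by (intro decseq_SucI) auto
    then obtain L where "(\<lambda>n. x n $ j) \<longlonglongrightarrow> L" using decseq_convergent[of _ 0] nn by blast
    then show ?thesis by blast
  qed
  then obtain Lf where Lf: "\<And>j. (\<lambda>n. x n $ j) \<longlonglongrightarrow> Lf j" by metis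
  define L where "L = (\<chi> j. Lf j)"
  have Lt: "\<forall>j. (\<lambda>n. x n $ j) \<longlonglongrightarrow> L $ j" using Lf by (simp add: L_def)
  have L0: "\<forall>j. L$j \<ge> 0"
  proof
    fix j
    show "L$j \<ge> 0"
      by (rule LIMSEQ_le_const[OF Lt[rule_format, of j]]) (use nn in blast)
  qed
  have fx: "L$j = c$j * I L j" for j
  proof -
    have "(\<lambda>n. x (Suc n) $ j) \<longlonglongrightarrow> L$j" using Lt LIMSEQ_Suc by blast
    moreover have "(\<lambda>n. x (Suc n) $ j) \<longlonglongrightarrow> c$j * I L j"
      unfolding xS T_def using I_tendsto[OF Lt] by (simp add: tendsto_mult_left)
    ultimately show ?thesis using LIMSEQ_unique by blast
  qed
  have "Gamma g K s L = c"
  proof -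
    have "sinr g K s L j = c$j" for j
    proof -
      have "L$j > 0" using fx[of j] c I_pos[OF L0] by simp
      then have "sinr g K s L j = L$j / I L j" using sinr_eq L0 by blast
      also have "\<dots> = c$j" using fx[of j] I_pos[OF L0, of j] by simp
      finally show ?thesis .
    qed
    then show ?thesis unfolding Gamma_def by (simp add: vec_eq_iff)
  qed
  then show ?thesis using L0 by blast
qed

lemma D_geo:
  assumes p: "\<forall>j. p$j > 0" and p': "\<forall>j. p'$j > 0" and k: "k \<in> {1..K i}"
    and u: "u \<ge> 0" "v \<ge> 0" "u+v=1"
  shows "D (\<chi> j. p$j powr u * p'$j powr v) i k \<le> D p i k powr u * D p' i k powr v"
proof -
  define A where "A = (\<Sum>j\<in>UNIV-{i}. g i k j * p$j) + s"
  define B where "B = (\<Sum>j\<in>UNIV-{i}. g i k j * p'$j) + s"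
  have G: "g i k i > 0" using g_direct_pos k by auto
  have h: "(\<Sum>j\<in>UNIV-{i}. g i k j * (p$j powr u * p'$j powr v)) + s \<le> A powr u * B powr v"
    unfolding A_def B_def using holder_sum[of "UNIV-{i}" "g i k" "\<lambda>j. p$j" "\<lambda>j. p'$j" s u v]
      p p' g_nonneg k noise u by (simp add: less_imp_le)
  have gg: "g i k i powr u * g i k i powr v = g i k i"
    using G u by (simp flip: powr_add)
  have DA: "D p i k = A / g i k i" unfolding D_def A_def by simp
  have DB: "D p' i k = B / g i k i" unfolding D_def B_def by simp
  have "D (\<chi> j. p$j powr u * p'$j powr v) i k
      = ((\<Sum>j\<in>UNIV-{i}. g i k j * (p$j powr u * p'$j powr v)) + s) / g i k i"
    unfolding D_def by simp
  also have "\<dots> \<le> A powr u * B powr v / g i k i"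
    using h G by (intro divide_right_mono) auto
  also have "\<dots> = A powr u * B powr v / (g i k i powr u * g i k i powr v)"
    by (simp only: gg)
  also have "\<dots> = D p i k powr u * D p' i k powr v"
    unfolding DA DB powr_divide by simp
  finally show ?thesis .
qed

lemma I_geo:
  assumes p: "\<forall>j. p$j > 0" and p': "\<forall>j. p'$j > 0"
    and u: "u \<ge> 0" "v \<ge> 0" "u+v=1"
  shows "I (\<chi> j. p$j powr u * p'$j powr v) i \<le> I p i powr u * I p' i powr v"
proof -
  obtain k0 where k0: "k0 \<in> {1..K i}" "I (\<chi> j. p$j powr u * p'$j powr v) i = D (\<chi> j. p$j powr u * p'$j powr v) i k0"
    using I_att by blast
  have p0: "\<forall>j. p$j \<ge> 0" "\<forall>j. p'$j \<ge> 0" using p p' less_imp_le by auto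
  have "D p i k0 powr u \<le> I p i powr u"
    using powr_mono2[OF u(1) _ I_ge[OF k0(1)]] D_pos[OF p0(1) k0(1)] by simp
  moreover have "D p' i k0 powr v \<le> I p' i powr v"
    using powr_mono2[OF u(2) _ I_ge[OF k0(1)]] D_pos[OF p0(2) k0(1)] by simp
  ultimately have "D p i k0 powr u * D p' i k0 powr v \<le> I p i powr u * I p' i powr v"
    by (intro mult_mono) auto
  then show ?thesis using k0 D_geo[OF p p' k0(1) u] by linarith
qed


lemma conv: "convex (log_set (feasible_sinr_region g K s))"
  unfolding convex_def
proof (intro ballI allI impI)
  fix a b :: "real^'n" and u v :: real
  assume a: "a \<in> log_set (feasible_sinr_region g K s)" and b: "b \<in> log_set (feasible_sinr_region g K s)"
    and uv: "0 \<le> u" "0 \<le> v" "u + v = 1"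
  obtain m p where ma: "a = (\<chi> i. ln (m$i))" "\<forall>i. m$i > 0" "m = Gamma g K s p" "\<forall>i. p$i \<ge> 0"
    using a unfolding log_set_def feasible_sinr_region_def by blast
  obtain m' p' where mb: "b = (\<chi> i. ln (m'$i))" "\<forall>i. m'$i > 0" "m' = Gamma g K s p'" "\<forall>i. p'$i \<ge> 0"
    using b unfolding log_set_def feasible_sinr_region_def by blast
  have rel: "p$i > 0 \<and> p$i = m$i * I p i"
    if "\<forall>i. m$i > 0" "m = Gamma g K s p" "\<forall>i. p$i \<ge> 0" for m p i
  proof -
    have mi: "m$i = sinr g K s p i" using that(2) by (simp add: Gamma_def)
    have "p$i \<noteq> 0" using sinr_zero[of p i] mi that(1) by (metis less_irrefl)
    then have pi: "p$i > 0" using that(3) by (simp add: less_le)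
    then have "m$i = p$i / I p i" using mi sinr_eq that(3) by simp
    then show ?thesis using pi I_pos[OF that(3), of i] by simp
  qed
  have pp: "\<forall>j. p$j > 0" "\<forall>j. p'$j > 0" using rel[OF ma(2-4)] rel[OF mb(2-4)] by blast+
  define q where "q = (\<chi> j. p$j powr u * p'$j powr v)"
  define c where "c = (\<chi> i. m$i powr u * m'$i powr v)"
  have c0: "\<forall>i. c$i > 0"
  proof
    fix i
    have "m$i \<noteq> 0" "m'$i \<noteq> 0" using ma(2) mb(2) by (metis less_irrefl)+
    then show "c$i > 0" by (simp add: c_def)
  qed
  have q0: "\<forall>j. q$j \<ge> 0" by (simp add: q_def)
  have sub: "\<forall>i. c$i * I q i \<le> q$i"
  proof
    fix i
    have "c$i * I q i \<le> c$i * (I p i powr u * I p' i powr v)"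
      unfolding q_def using I_geo[OF pp uv] c0 by (simp add: mult_left_mono less_imp_le)
    also have "\<dots> = (m$i * I p i) powr u * (m'$i * I p' i) powr v"
      by (simp add: c_def powr_mult)
    also have "\<dots> = q$i" using rel[OF ma(2-4), of i] rel[OF mb(2-4), of i]
      by (simp add: q_def)
    finally show "c$i * I q i \<le> q$i" .
  qed
  obtain ps where ps: "\<forall>i. ps$i \<ge> 0" "Gamma g K s ps = c" using fixed_point[OF c0 q0 sub] by blast
  have "u *\<^sub>R a + v *\<^sub>R b = (\<chi> i. ln (c$i))"
    unfolding ma(1) mb(1) c_def using ma(2) mb(2)
    by (simp add: vec_eq_iff ln_mult ln_powr) (metis less_irrefl)
  moreover have "c \<in> feasible_sinr_region g K s" using ps unfolding feasible_sinr_region_def by blast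
  ultimately show "u *\<^sub>R a + v *\<^sub>R b \<in> log_set (feasible_sinr_region g K s)"
    unfolding log_set_def using c0 by blast
qed

end

theorem theorem5:
  fixes g :: "'n::finite \<Rightarrow> nat \<Rightarrow> 'n \<Rightarrow> real"
    and K :: "'n \<Rightarrow> nat"
    and sigma2 :: real
  assumes K_pos: "\<forall>i. K i \<ge> 1"
    and g_nonneg: "\<forall>i k j. k \<in> {1..K i} \<longrightarrow> g i k j \<ge> 0"
    and g_direct_pos: "\<forall>i k. k \<in> {1..K i} \<longrightarrow> g i k i > 0"
    and irred: "\<forall>kk :: 'n \<Rightarrow> nat. (\<forall>i. kk i \<in> {1..K i}) \<longrightarrow>
                  irreducible_mat (\<lambda>i j. if j = i then 0 else g i (kk i) j / g i (kk i) i)"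
    and noise: "sigma2 > 0"
  shows "convex (log_set (feasible_sinr_region g K sigma2))"
proof -
  interpret msys g K sigma2 using assms by unfold_locales auto
  show ?thesis by (rule conv)
qed

end
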